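(* For packed words $f,g$ of length $n$, write $f\leq g$ if (1) for all $i,j\in[n]$, ($i\geq j$ and $f(i)\leq f(j)$) implies $g(i)\leq g(j)$; and (2) for all $i,j\in[n]$, $g(i)=g(j)$ implies $f(i)=f(j)$. Then $\leq$ is a partial order on the set $PW(n)$ of packed words of length $n$. Moreover, for every $f\in PW(n)$, $$\phi(P_f)=\sum_{g\in PW(n),\ f\leq g} g,$$ i.e. the set of linear extensions of $P_f$ is $\{g\in PW(n)\mid f\leq g\}$.
   Context: A packed word of length $n$ is a word $w(1)\cdots w(n)$ of positive integers whose set of letters is $\{1,\dots,k\}$ for some $k$; equivalently a surjection $[n]\to[k]$. A weak plane poset is a finite set with two partial orders $\leq_1,\leq_2$ such that $x\leq_1 y$ and $x\leq_2 y$ imply $x=y$, and such that $x\preceq y\iff(x\leq_1 y$ or $x\leq_2 y)$ is a total quasi-order; write $x\equiv y$ if $x\preceq y$ and $y\preceq x$. For a packed word $w$ of length $n$, $P_w=([n],\leq_1,\leq_2)$ with $i\leq_1 j\iff(i\geq j$ and $w(i)\leq w(j))$ and $i\leq_2 j\iff(i\leq j$ and $w(i)\leq w(j))$. For a weak plane poset $P$ with underlying set $[n]$ such that the total order $x\ll y\iff(y\leq_1 x$ or $x\leq_2 y)$ is the natural order of $[n]$ (as is the case for $P_w$), a linear extension of $P$ is a surjection $f:[n]\to[k]$ (seen as the packed word $f(1)\cdots f(n)$) such that (a) $i\leq_1 j\Rightarrow f(i)\leq f(j)$ and (b) $f(i)=f(j)\Rightarrow i\equiv j$. Let $\mathbf{WQSym}$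 be the vector space with basis all packed words. The linear map $\phi$ from the span of isomorphism classes of weak plane posets to $\mathbf{WQSym}$ sends $P$ to the sum of its linear extensions. *)

theory Defs
  imports Main
begin

definition PW :: "nat \<Rightarrow> (nat \<Rightarrow> nat) set" where
  "PW n = {w. (\<exists>k. w ` {1..n} = {1..k}) \<and> (\<forall>i. i \<notin> {1..n} \<longrightarrow> w i = 0)}"

text \<open>The two partial orders of the weak plane poset P_w on [n].\<close>
definition le1 :: "(nat \<Rightarrow> nat) \<Rightarrow> nat \<Rightarrow> nat \<Rightarrow> bool" where
  "le1 w i j \<longleftrightarrow> i \<ge> j \<and> w i \<le> w j"

definition le2 :: "(nat \<Rightarrow> nat) \<Rightarrow> nat \<Rightarrow> nat \<Rightarrow> bool" where
  "le2 w i j \<longleftrightarrow> i \<le> j \<and> w i \<le> w j"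

definition preceq :: "(nat \<Rightarrow> nat) \<Rightarrow> nat \<Rightarrow> nat \<Rightarrow> bool" where
  "preceq w i j \<longleftrightarrow> le1 w i j \<or> le2 w i j"

definition equiv_P :: "(nat \<Rightarrow> nat) \<Rightarrow> nat \<Rightarrow> nat \<Rightarrow> bool" where
  "equiv_P w i j \<longleftrightarrow> preceq w i j \<and> preceq w j i"

definition lin_ext :: "nat \<Rightarrow> (nat \<Rightarrow> nat) \<Rightarrow> (nat \<Rightarrow> nat) set" where
  "lin_ext n w = {f \<in> PW n.
      (\<forall>i\<in>{1..n}. \<forall>j\<in>{1..n}. le1 w i j \<longrightarrow> f i \<le> f j) \<and>
      (\<forall>i\<in>{1..n}. \<forall>j\<in>{1..n}. f i = f j \<longrightarrow> equiv_P w i j)}"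

definition pw_le :: "nat \<Rightarrow> (nat \<Rightarrow> nat) \<Rightarrow> (nat \<Rightarrow> nat) \<Rightarrow> bool" where
  "pw_le n f g \<longleftrightarrow>
     (\<forall>i\<in>{1..n}. \<forall>j\<in>{1..n}. (i \<ge> j \<and> f i \<le> f j) \<longrightarrow> g i \<le> g j) \<and>
     (\<forall>i\<in>{1..n}. \<forall>j\<in>{1..n}. g i = g j \<longrightarrow> f i = f j)"

end

theory Submission
  imports Defs
begin

lemma pw_rank:
  assumes "f \<in> PW n" "i \<in> {1..n}"
  shows "f i = card (f ` {j\<in>{1..n}. f j \<le> f i})"
proof -
  from assms(1) obtain k where k: "f ` {1..n} = {1..k}" unfolding PW_def by auto
  have fi: "f i \<in> {1..k}" using k assms(2) by blast
  have "f ` {j\<in>{1..n}. f j \<le> f i} = {1..f i}"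
  proof
    show "f ` {j\<in>{1..n}. f j \<le> f i} \<subseteq> {1..f i}" using k by fastforce
    show "{1..f i} \<subseteq> f ` {j\<in>{1..n}. f j \<le> f i}"
    proof
      fix v assume v: "v \<in> {1..f i}"
      then have "v \<in> f ` {1..n}" using k fi by auto
      then obtain j where "j \<in> {1..n}" "v = f j" by blast
      then show "v \<in> f ` {j\<in>{1..n}. f j \<le> f i}" using v by auto
    qed
  qed
  then show ?thesis by simp
qed

lemma card_same_kernel:
  assumes "\<forall>i\<in>S. \<forall>j\<in>S. f i = f j \<longleftrightarrow> g i = g j"
  shows "card (f ` S) = card (g ` S)"
proof -
  define h where "h = (\<lambda>v. g (inv_into S f v))"
  have hf: "h (f x) = g x" if "x \<in> S" for x
  proof -
    have "inv_into S f (f x) \<in> S" "f (inv_into S f (f x)) = f x"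
      using that by (auto intro: inv_into_into f_inv_into_f)
    then show ?thesis using assms that unfolding h_def by blast
  qed
  have "g ` S = h ` (f ` S)" using hf by (auto simp: image_image)
  moreover have "inj_on h (f ` S)"
  proof (rule inj_onI)
    fix x y assume "x \<in> f ` S" "y \<in> f ` S" "h x = h y"
    then obtain a b where "a \<in> S" "b \<in> S" "x = f a" "y = f b" "g a = g b"
      using hf by auto
    then show "x = y" using assms by blast
  qed
  ultimately show ?thesis by (simp add: card_image)
qed

lemma pw_antisym:
  assumes "f \<in> PW n" "g \<in> PW n" "pw_le n f g" "pw_le n g f"
  shows "f = g"
proof
  fix i
  show "f i = g i"
  proof (cases "i \<in> {1..n}")
    case False
    then show ?thesis using assms(1,2) unfolding PW_def by auto
  next
    case True
    have eq: "f a = f b \<longleftrightarrow> g a = g b" if "a \<in> {1..n}" "b \<in> {1..n}" for a b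
      using assms(3,4) that unfolding pw_le_def by blast
    have le1: "f a \<le> f b \<longleftrightarrow> g a \<le> g b" if "a \<in> {1..n}" "b \<in> {1..n}" "a \<ge> b" for a b
    proof
      show "f a \<le> f b \<Longrightarrow> g a \<le> g b" using assms(3) that unfolding pw_le_def by blast
      show "g a \<le> g b \<Longrightarrow> f a \<le> f b" using assms(4) that unfolding pw_le_def by blast
    qed
    have le: "f a \<le> f b \<longleftrightarrow> g a \<le> g b" if "a \<in> {1..n}" "b \<in> {1..n}" for a b
    proof (cases "a \<ge> b")
      case True then show ?thesis using le1 that by blast
    next
      case False
      then have "f b \<le> f a \<longleftrightarrow> g b \<le> g a" using le1 that by simp
      moreover have "f a = f b \<longleftrightarrow> g a = g b" using eq that by blast
      ultimately show ?thesis by linarith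
    qed
    have S: "{j\<in>{1..n}. f j \<le> f i} = {j\<in>{1..n}. g j \<le> g i}" using le True by blast
    have "f i = card (f ` {j\<in>{1..n}. f j \<le> f i})" using pw_rank assms(1) True by blast
    also have "\<dots> = card (g ` {j\<in>{1..n}. f j \<le> f i})"
      by (rule card_same_kernel) (use eq in blast)
    also have "\<dots> = g i" using pw_rank[OF assms(2) True] S by simp
    finally show ?thesis .
  qed
qed

theorem mainTheorem4:
  shows "partial_order_on (PW n) {(f, g). f \<in> PW n \<and> g \<in> PW n \<and> pw_le n f g}
    \<and> (\<forall>f \<in> PW n. lin_ext n f = {g \<in> PW n. pw_le n f g})"
proof
  show "partial_order_on (PW n) {(f, g). f \<in> PW n \<and> g \<in> PW n \<and> pw_le n f g}"
    unfolding partial_order_on_def preorder_on_def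
  proof (intro conjI)
    show "refl_on (PW n) {(f, g). f \<in> PW n \<and> g \<in> PW n \<and> pw_le n f g}"
      unfolding refl_on_def pw_le_def by auto
    show "trans {(f, g). f \<in> PW n \<and> g \<in> PW n \<and> pw_le n f g}"
    proof (rule transI)
      fix x y z assume "(x, y) \<in> {(f, g). f \<in> PW n \<and> g \<in> PW n \<and> pw_le n f g}"
        "(y, z) \<in> {(f, g). f \<in> PW n \<and> g \<in> PW n \<and> pw_le n f g}"
      then have a: "x \<in> PW n" "z \<in> PW n" "pw_le n x y" "pw_le n y z" by auto
      have "pw_le n x z" unfolding pw_le_def
      proof (intro conjI ballI impI)
        fix i j assume "i \<in> {1..n}" "j \<in> {1..n}" "j \<le> i \<and> x i \<le> x j"
        then show "z i \<le> z j" using a(3,4) unfolding pw_le_def by blast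
      next
        fix i j assume "i \<in> {1..n}" "j \<in> {1..n}" "z i = z j"
        then show "x i = x j" using a(3,4) unfolding pw_le_def by blast
      qed
      then show "(x, z) \<in> {(f, g). f \<in> PW n \<and> g \<in> PW n \<and> pw_le n f g}" using a by auto
    qed
    show "antisym {(f, g). f \<in> PW n \<and> g \<in> PW n \<and> pw_le n f g}"
      unfolding antisym_def using pw_antisym by blast
  qed (auto)
next
  have e: "equiv_P f i j \<longleftrightarrow> f i = f j" for f :: "nat \<Rightarrow> nat" and i j
    unfolding equiv_P_def preceq_def le1_def le2_def by auto
  show "\<forall>f \<in> PW n. lin_ext n f = {g \<in> PW n. pw_le n f g}"
    unfolding lin_ext_def pw_le_def e le1_def by auto
qed

end
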